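(* Let $r,K,\mu$ satisfy Assumption 1. There exists a unique $(w,m)\in(0,1)\times(0,K)$ such that $f_w(w,m)=f_m(w,m)=0$.
   Context: Assumption 1: $r\in(1,\infty)$, $\mu\in\left(0,\min\left(\frac r2,1-\frac1r,1-K,K\right)\right)$, $K\in\left(0,\min\left(1,\frac{r}{r-1}\left(1-\frac{\mu}{1-\mu}\right)\right)\right)$. $f_w(w,m):=w(1-(w+m))+\mu(m-w)$, $f_m(w,m):=rm\left(1-\frac{w+m}{K}\right)+\mu(w-m)$. *)

theory Defs
  imports Complex_Main
begin

definition f_w :: "real \<Rightarrow> real \<Rightarrow> real \<Rightarrow> real" where
  "f_w \<mu> w m = w * (1 - (w + m)) + \<mu> * (m - w)"

definition f_m :: "real \<Rightarrow> real \<Rightarrow> real \<Rightarrow> real \<Rightarrow> real \<Rightarrow> real" where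
  "f_m r K \<mu> w m = r * m * (1 - (w + m) / K) + \<mu> * (w - m)"

definition assumption1 :: "real \<Rightarrow> real \<Rightarrow> real \<Rightarrow> bool" where
  "assumption1 r K \<mu> \<longleftrightarrow>
     1 < r \<and>
     0 < \<mu> \<and> \<mu> < min (min (r / 2) (1 - 1 / r)) (min (1 - K) K) \<and>
     0 < K \<and> K < min 1 ((r / (r - 1)) * (1 - \<mu> / (1 - \<mu>)))"

end

theory Submission
  imports Defs
begin

lemma quad_unique:
  fixes a b c t1 t2 :: real
  assumes "a > 0" "c > 0" "t1 > 0" "t2 > 0"
    "a*t1^2 + b*t1 - c = 0" "a*t2^2 + b*t2 - c = 0"
  shows "t1 = t2"
proof (rule ccontr)
  assume ne: "t1 \<noteq> t2"
  have "(t1 - t2) * (a*(t1+t2) + b) = 0" using assms(5,6)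
    by (simp add: algebra_simps power2_eq_square)
  hence hb: "b = - a*(t1+t2)" using ne by simp
  have "c = -(a*t1*t2)" using assms(5) hb by (simp add: algebra_simps power2_eq_square)
  moreover have "a*t1*t2 > 0" using assms by simp
  ultimately show False using assms by simp
qed

lemma sol_imp_quad:
  fixes r K \<mu> w m :: real
  assumes "r > 0" "K > 0" "\<mu> > 0" "w > 0" "m > 0"
    "f_w \<mu> w m = 0" "f_m r K \<mu> w m = 0"
  shows "r*\<mu>*(m/w)^2 + (r - r*\<mu> - K*r + K*\<mu>)*(m/w) - K*\<mu> = 0"
    "w = (1 + \<mu>*(m/w - 1)) / (1 + m/w)"
    "m = (m/w) * (1 + \<mu>*(m/w - 1)) / (1 + m/w)"
proof -
  define t where "t = m/w"
  have tpos: "t > 0" using assms unfolding t_def by simp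
  have mt: "m = t*w" using assms unfolding t_def by simp
  have e1: "w*(1 - (w+m) + \<mu>*(t-1)) = 0" using assms(6) unfolding f_w_def mt
    by (simp add: algebra_simps)
  hence S1: "w + m = 1 + \<mu>*(t-1)" using assms(4) by simp
  have "K * f_m r K \<mu> w m = r*m*K - r*m*(w+m) + K*\<mu>*(w-m)" unfolding f_m_def
    using assms(2) by (simp add: field_simps)
  hence "r*m*K - r*m*(w+m) + K*\<mu>*(w-m) = 0" using assms(7) by simp
  hence "r*m*(K - (w+m)) + K*\<mu>*(w-m) = 0" by (simp add: algebra_simps)
  hence "w*(r*t*(K - (w+m)) + K*\<mu>*(1 - t)) = 0" unfolding mt by (simp add: algebra_simps)
  hence "r*t*(K - (w+m)) + K*\<mu>*(1 - t) = 0" using assms(4) by simp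
  moreover have "K - (w+m) = K - 1 - \<mu>*(t-1)" using S1 by simp
  ultimately have E: "r*t*(K - 1 - \<mu>*(t-1)) + K*\<mu>*(1 - t) = 0" by simp
  have "r*\<mu>*t^2 + (r - r*\<mu> - K*r + K*\<mu>)*t - K*\<mu> = - (r*t*(K - 1 - \<mu>*(t-1)) + K*\<mu>*(1 - t))"
    by (simp add: algebra_simps power2_eq_square)
  with E show "r*\<mu>*(m/w)^2 + (r - r*\<mu> - K*r + K*\<mu>)*(m/w) - K*\<mu> = 0"
    unfolding t_def by simp
  have W: "w*(1+t) = 1 + \<mu>*(t-1)" using S1 mt by (simp add: algebra_simps)
  have "1 + t > 0" using tpos by simp
  hence W2: "w = (1 + \<mu>*(t-1))/(1+t)" using W by (simp add: eq_divide_eq)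
  thus "w = (1 + \<mu>*(m/w - 1)) / (1 + m/w)" unfolding t_def .
  have "m = t*((1 + \<mu>*(t-1))/(1+t))" using mt W2 by simp
  thus "m = (m/w) * (1 + \<mu>*(m/w - 1)) / (1 + m/w)" unfolding t_def by simp
qed

theorem mainTheorem18:
  fixes r K \<mu> :: real
  assumes "assumption1 r K \<mu>"
  shows "\<exists>!(w, m). w \<in> {0<..<1} \<and> m \<in> {0<..<K} \<and>
            f_w \<mu> w m = 0 \<and> f_m r K \<mu> w m = 0"
proof -
  have r1: "r > 1" and mu0: "\<mu> > 0" and K0: "K > 0" and muK: "\<mu> < 1 - K"
    using assms unfolding assumption1_def by auto
  have mu1: "\<mu> < 1" using muK K0 by simp
  define a where "a = r*\<mu>"
  define b where "b = r - r*\<mu> - K*r + K*\<mu>"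
  define D where "D = sqrt (b^2 + 4*a*(K*\<mu>))"
  define t where "t = (D - b)/(2*a)"
  have a0: "a > 0" using r1 mu0 unfolding a_def by simp
  have "4*a*(K*\<mu>) > 0" using a0 mu0 K0 by simp
  moreover have "b^2 \<ge> 0" by simp
  ultimately have nn: "0 \<le> b^2 + 4*a*(K*\<mu>)" by linarith
  have D2: "D^2 = b^2 + 4*a*(K*\<mu>)" unfolding D_def
    using real_sqrt_pow2[OF nn] .
  have D0: "D \<ge> 0" unfolding D_def using nn by simp
  have "D^2 > b^2" using D2 a0 mu0 K0 by simp
  hence Db: "D > b"
  proof -
    assume H: "D^2 > b^2"
    show "D > b"
    proof (rule ccontr)
      assume "\<not> D > b"
      hence "D \<le> b" by simp
      hence "D^2 \<le> b^2" using power_mono[of D b 2] D0 by simp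
      thus False using H by simp
    qed
  qed
  have tpos: "t > 0" unfolding t_def using Db a0 by simp
  have quad: "a*t^2 + b*t - K*\<mu> = 0"
  proof -
    have "2*a*t = D - b" unfolding t_def using a0 by simp
    hence "4*a*(a*t^2 + b*t) = (2*a*t)^2 + 2*b*(2*a*t)"
      by (simp add: algebra_simps power2_eq_square)
    also have "\<dots> = (D-b)^2 + 2*b*(D-b)" using \<open>2*a*t = D - b\<close> by simp
    also have "\<dots> = D^2 - b^2" by (simp add: algebra_simps power2_eq_square)
    finally have "4*a*(a*t^2 + b*t) = 4*a*(K*\<mu>)" using D2 by simp
    thus ?thesis using a0 by simp
  qed
  define S where "S = 1 + \<mu>*(t-1)"
  define w where "w = S/(1+t)"
  define m where "m = t*S/(1+t)"
  have "\<mu>*t > 0" using mu0 tpos by simp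
  hence S0: "S > 0" unfolding S_def using mu1 by (simp add: algebra_simps)
  have w0: "w > 0" unfolding w_def using S0 tpos by simp
  have m0: "m > 0" unfolding m_def using S0 tpos by simp
  have mw: "m = t*w" unfolding m_def w_def by simp
  have "w + m = (S + t*S)/(1+t)" unfolding w_def m_def by (simp add: add_divide_distrib)
  also have "\<dots> = S*(1+t)/(1+t)" by (simp add: algebra_simps)
  also have "\<dots> = S" using tpos by simp
  finally have sum: "w + m = S" .
  have "\<mu>*t < t" using mu1 tpos by simp
  hence "S < 1+t" unfolding S_def using mu0 by (simp add: algebra_simps)
  hence w1: "w < 1" unfolding w_def using tpos by simp
  have SK: "r*t*(K - S) + K*\<mu>*(1 - t) = 0"
    using quad unfolding S_def a_def b_def by (simp add: algebra_simps power2_eq_square)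
  have mK: "m < K"
  proof -
    have "r*t*S = r*t*K + K*\<mu>*(1-t)" using SK by (simp add: algebra_simps)
    have "r*(1+t)*m = t*(r*S)" unfolding m_def using tpos by (simp add: field_simps)
    also have "\<dots> = r*t*K + K*\<mu>*(1-t)" using \<open>r*t*S = _\<close> by (simp add: algebra_simps)
    also have "\<dots> < r*(1+t)*K"
    proof -
      have "\<mu>*(1-t) = \<mu> - \<mu>*t" by (simp add: algebra_simps)
      hence "\<mu>*(1-t) < r" using mu1 r1 \<open>\<mu>*t > 0\<close> by linarith
      hence "K*(\<mu>*(1-t)) < K*r" using K0 by simp
      thus ?thesis by (simp add: algebra_simps)
    qed
    finally have "(r*(1+t))*m < (r*(1+t))*K" .
    moreover have "r*(1+t) > 0" using r1 tpos by simp
    ultimately show ?thesis using mult_less_cancel_left_pos by blast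
  qed
  have fw: "f_w \<mu> w m = 0"
  proof -
    have "f_w \<mu> w m = w*(1 - S + \<mu>*(t-1))" unfolding f_w_def
      using sum mw by (simp add: algebra_simps)
    thus ?thesis unfolding S_def by simp
  qed
  have fm: "f_m r K \<mu> w m = 0"
  proof -
    have "K * f_m r K \<mu> w m = r*m*(K - S) + K*\<mu>*(w - m)" unfolding f_m_def
      using sum K0 by (simp add: field_simps)
    also have "\<dots> = w*(r*t*(K - S) + K*\<mu>*(1 - t))" using mw by (simp add: algebra_simps)
    finally show ?thesis using SK K0 by simp
  qed
  show ?thesis
  proof (rule ex1I[of _ "(w, m)"])
    show "case (w, m) of (w, m) \<Rightarrow> w \<in> {0<..<1} \<and> m \<in> {0<..<K} \<and>
            f_w \<mu> w m = 0 \<and> f_m r K \<mu> w m = 0"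
      using w0 w1 m0 mK fw fm by simp
  next
    fix p
    assume "case p of (w, m) \<Rightarrow> w \<in> {0<..<1} \<and> m \<in> {0<..<K} \<and>
            f_w \<mu> w m = 0 \<and> f_m r K \<mu> w m = 0"
    then obtain w' m' where p: "p = (w', m')" and h: "w' > 0" "m' > 0"
      "f_w \<mu> w' m' = 0" "f_m r K \<mu> w' m' = 0"
      by (cases p) auto
    note q = sol_imp_quad[OF _ K0 mu0 h(1,2,3,4)]
    have r0: "r > 0" using r1 by simp
    have "m'/w' = t"
      apply (rule quad_unique[of a "K*\<mu>" _ _ b])
      using a0 mu0 K0 h tpos quad q(1)[OF r0] unfolding a_def b_def by auto
    have "w' = S/(1+t)" using q(2)[OF r0] unfolding S_def \<open>m'/w' = t\<close> .
    moreover have "m' = t*S/(1+t)" using q(3)[OF r0] unfolding S_def \<open>m'/w' = t\<close> .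
    ultimately have "w' = w" "m' = m" unfolding w_def m_def by simp_all
    thus "p = (w, m)" using p by simp
  qed
qed

end
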